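(* Let $\lambda>0$ and let $A\in\mathbb{R}^{3\times3}$ with $\det A>0$, whose singular values satisfy $\lambda_1\le\lambda_2\le\lambda_3$. Let $\alpha=\lambda_2\lambda_3-\lambda\lambda_1$, $\beta=\lambda_1\lambda_3-\lambda\lambda_2$, $\gamma=\lambda_1\lambda_2-\lambda\lambda_3$. Then there is $R\in SO(3)$ such that $$G(A)=(1-R_{11})\alpha+(1-R_{22})\beta+(1-R_{33})\gamma.$$
   Context: Singular values of $A$ are the square roots of the eigenvalues of $A^TA$. $P(A)=\sum_{1\le i<j\le3}\lambda_i(A)\lambda_j(A)-\lambda\sum_i\lambda_i(A)$, $N(A)=\operatorname{tr}\operatorname{cof}A-\lambda\operatorname{tr}A$ (cof the cofactor matrix), and $G(A)=P(A)-N(A)$. *)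

theory Defs
  imports "HOL-Analysis.Analysis"
begin

text \<open>Cofactor matrix: entry (i,j) is the determinant of A with row i replaced by the
  j-th unit row vector, i.e. (-1)^(i+j) times the (i,j) minor.\<close>
definition cof :: "real^'n^'n \<Rightarrow> real^'n^'n" where
  "cof A = (\<chi> i j. det (\<chi> k l. if k = i then (if l = j then 1 else 0) else A $ k $ l))"

text \<open>l1, l2, l3 are the singular values of A (with multiplicity), i.e. nonnegative
  square roots of the eigenvalues of A^T A counted with algebraic multiplicity.\<close>
definition singular_values3 :: "real^3^3 \<Rightarrow> real \<Rightarrow> real \<Rightarrow> real \<Rightarrow> bool" where
  "singular_values3 A l1 l2 l3 \<longleftrightarrow> 0 \<le> l1 \<and> 0 \<le> l2 \<and> 0 \<le> l3 \<and>
     (\<forall>t::real. det (t *\<^sub>R mat 1 - transpose A ** A) = (t - l1\<^sup>2) * (t - l2\<^sup>2) * (t - l3\<^sup>2))"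

definition Pfun :: "real \<Rightarrow> real \<Rightarrow> real \<Rightarrow> real \<Rightarrow> real" where
  "Pfun lam l1 l2 l3 = (l1 * l2 + l1 * l3 + l2 * l3) - lam * (l1 + l2 + l3)"

definition Nfun :: "real \<Rightarrow> real^'n^'n \<Rightarrow> real" where
  "Nfun lam A = trace (cof A) - lam * trace A"

definition Gfun :: "real \<Rightarrow> real^3^3 \<Rightarrow> real \<Rightarrow> real \<Rightarrow> real \<Rightarrow> real" where
  "Gfun lam A l1 l2 l3 = Pfun lam l1 l2 l3 - Nfun lam A"

end

theory Submission imports Defs begin

definition diag3 :: "real \<Rightarrow> real \<Rightarrow> real \<Rightarrow> real^3^3" where
  "diag3 a b c = (\<chi> i j. if i = j then (if i = 1 then a else if i = 2 then b else c) else 0)"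

lemma diag3_simps[simp]:
  "diag3 a b c $ 1 $ 1 = a" "diag3 a b c $ 2 $ 2 = b" "diag3 a b c $ 3 $ 3 = c"
  "diag3 a b c $ 1 $ 2 = 0" "diag3 a b c $ 1 $ 3 = 0" "diag3 a b c $ 2 $ 1 = 0"
  "diag3 a b c $ 2 $ 3 = 0" "diag3 a b c $ 3 $ 1 = 0" "diag3 a b c $ 3 $ 2 = 0"
  by (simp_all add: diag3_def)

lemma cof_prop: "transpose X ** cof X = det X *\<^sub>R mat 1" for X :: "real^3^3"
  unfolding vec_eq_iff forall_3
  by (simp add: cof_def matrix_matrix_mult_def sum_3 det_3 mat_def transpose_def algebra_simps)

lemma trace_svd: "trace (U ** diag3 a b c ** transpose V) =
   a * (transpose V ** U) $ 1 $ 1 + b * (transpose V ** U) $ 2 $ 2 + c * (transpose V ** U) $ 3 $ 3"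
  for U V :: "real^3^3"
  by (simp add: trace_def matrix_matrix_mult_def sum_3 transpose_def algebra_simps)

lemma sym_inner:
  fixes M :: "real^'n^'n"
  assumes "transpose M = M"
  shows "(M *v x) \<bullet> y = x \<bullet> (M *v y)"
  by (metis assms dot_lmul_matrix transpose_matrix_vector)

lemma sym_eig:
  fixes M :: "real^'n^'n" and S :: "(real^'n) set"
  assumes sym: "transpose M = M" and sub: "subspace S" and x0: "x0 \<in> S" "x0 \<noteq> 0"
    and inv: "\<And>x. x \<in> S \<Longrightarrow> M *v x \<in> S"
  shows "\<exists>v\<in>S. norm v = 1 \<and> M *v v = (v \<bullet> (M *v v)) *\<^sub>R v \<and>
          (\<forall>x\<in>S. norm x = 1 \<longrightarrow> x \<bullet> (M *v x) \<le> v \<bullet> (M *v v))"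
proof -
  let ?K = "S \<inter> sphere 0 1"
  have cK: "compact ?K"
    using closed_subspace[OF sub] compact_sphere by (simp add: closed_Int_compact)
  have "(1/norm x0) *\<^sub>R x0 \<in> ?K" using x0 sub by (simp add: subspace_scale)
  hence ne: "?K \<noteq> {}" by blast
  have cont: "continuous_on ?K (\<lambda>x. x \<bullet> (M *v x))"
    by (intro continuous_intros)
  obtain v where vK: "v \<in> ?K" and vmax: "\<forall>x\<in>?K. x \<bullet> (M *v x) \<le> v \<bullet> (M *v v)"
    using continuous_attains_sup[OF cK ne cont] by blast
  define \<mu> where "\<mu> = v \<bullet> (M *v v)"
  define w where "w = M *v v - \<mu> *\<^sub>R v"
  have vS: "v \<in> S" and nv1: "norm v = 1" using vK by auto
  have wS: "w \<in> S" unfolding w_def using sub inv[OF vS] vS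
    by (simp add: subspace_diff subspace_scale)
  have nv: "v \<bullet> v = 1" using nv1 by (simp add: norm_eq_1)
  have wv: "v \<bullet> w = 0" by (simp add: w_def inner_diff_right \<mu>_def nv)
  have Mv: "M *v v = w + \<mu> *\<^sub>R v" by (simp add: w_def)
  have wMv: "w \<bullet> (M *v v) = w \<bullet> w" using wv by (simp add: Mv inner_add_right inner_commute)
  have vMw: "v \<bullet> (M *v w) = w \<bullet> w" using wMv sym_inner[OF sym, of v w] by (simp add: inner_commute)
  have key: "2*t*(w\<bullet>w) \<le> t^2 * (\<mu>*(w\<bullet>w) - w\<bullet>(M*v w))" for t :: real
  proof -
    define x where "x = v + t *\<^sub>R w"
    have xS: "x \<in> S" unfolding x_def using sub vS wS by (simp add: subspace_add subspace_scale)
    have nx: "x \<bullet> x = 1 + t^2 * (w\<bullet>w)"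
      unfolding x_def using nv wv
      by (simp add: inner_add_left inner_add_right inner_commute power2_eq_square)
    have pos: "x \<bullet> x > 0" unfolding nx by (simp add: add_pos_nonneg)
    hence nxp: "norm x > 0" by (simp add: inner_gt_zero_iff)
    have nn: "(norm x)^2 = x \<bullet> x" by (simp add: power2_norm_eq_inner)
    define y where "y = (1/norm x) *\<^sub>R x"
    have "y \<in> ?K" unfolding y_def using xS nxp sub by (simp add: subspace_scale)
    hence "y \<bullet> (M *v y) \<le> \<mu>" using vmax \<mu>_def by blast
    moreover have "y \<bullet> (M *v y) = (x \<bullet> (M *v x)) / (x \<bullet> x)"
      unfolding y_def by (simp add: matrix_vector_mult_scaleR nn[symmetric] power2_eq_square)
    ultimately have "x \<bullet> (M *v x) \<le> \<mu> * (x \<bullet> x)" using pos by (simp add: divide_le_eq)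
    moreover have "x \<bullet> (M *v x) = \<mu> + 2*t*(w\<bullet>w) + t^2 * (w \<bullet> (M *v w))"
      unfolding x_def using wMv vMw
      by (simp add: matrix_vector_mult_scaleR matrix_vector_right_distrib inner_add_left inner_add_right
          \<mu>_def power2_eq_square algebra_simps)
    ultimately show ?thesis unfolding nx by (simp add: algebra_simps)
  qed
  have w0: "w = 0"
  proof (rule ccontr)
    assume "w \<noteq> 0"
    hence a: "w \<bullet> w > 0" by simp
    define C where "C = \<mu>*(w\<bullet>w) - w\<bullet>(M*v w)"
    define t where "t = (w\<bullet>w) / (\<bar>C\<bar> + 1)"
    have tp: "t > 0" using a by (simp add: t_def)
    have "2*t*(w\<bullet>w) \<le> t^2 * C" using key[of t] by (simp add: C_def)
    also have "\<dots> \<le> t^2 * \<bar>C\<bar>" by (simp add: mult_left_mono)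
    finally have "2*(w\<bullet>w) \<le> t * \<bar>C\<bar>" using tp by (simp add: power2_eq_square)
    moreover have "t * \<bar>C\<bar> < w\<bullet>w" using a by (simp add: t_def field_simps)
    ultimately show False using a by linarith
  qed
  show ?thesis
    using vS nv1 w0 vmax by (auto simp: w_def \<mu>_def)
qed

lemma ker_det:
  fixes A :: "real^'n^'n"
  assumes "det A \<noteq> 0" "A *v x = 0"
  shows "x = 0"
proof -
  from assms(1) have "invertible A" by (simp add: invertible_det_nz)
  then obtain B where "B ** A = mat 1" unfolding invertible_def by blast
  hence "x = B *v (A *v x)" by (simp add: matrix_vector_mul_assoc)
  thus ?thesis using assms(2) by simp
qed

lemma rayleigh_nonneg:
  fixes A :: "real^'n^'n"
  shows "v \<bullet> ((transpose A ** A) *v v) = (A *v v) \<bullet> (A *v v)"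
  by (metis dot_lmul_matrix matrix_vector_mul_assoc vector_transpose_matrix inner_commute)

lemma inner_AtA:
  fixes A :: "real^'n^'n"
  shows "x \<bullet> ((transpose A ** A) *v y) = (A *v x) \<bullet> (A *v y)"
  by (metis dot_lmul_matrix matrix_vector_mul_assoc vector_transpose_matrix inner_commute)


definition mk3 :: "real^3 \<Rightarrow> real^3 \<Rightarrow> real^3 \<Rightarrow> real^3^3" where
  "mk3 a b c = (\<chi> i j. (if j = 1 then a else if j = 2 then b else c) $ i)"

lemma mk3_cols: "column 1 (mk3 a b c) = a" "column 2 (mk3 a b c) = b" "column 3 (mk3 a b c) = c"
  by (simp_all add: column_def mk3_def vec_eq_iff)

lemma mk3_orth:
  assumes "norm a = 1" "norm b = 1" "norm c = 1" "a \<bullet> b = 0" "a \<bullet> c = 0" "b \<bullet> c = 0"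
  shows "orthogonal_matrix (mk3 a b c)"
  unfolding orthogonal_matrix_orthonormal_columns forall_3 orthogonal_def mk3_cols
  using assms by (simp add: inner_commute)

lemma det_mk3_scale: "det (mk3 (e *\<^sub>R a) b c) = e * det (mk3 a b c)"
  by (simp add: det_3 mk3_def algebra_simps)

lemma mult_mk3: "A ** mk3 a b c = mk3 (A *v a) (A *v b) (A *v c)" for A :: "real^3^3"
  unfolding vec_eq_iff forall_3
  by (simp add: mk3_def matrix_matrix_mult_def matrix_vector_mult_def)

lemma mk3_diag: "mk3 x y z ** diag3 p q r = mk3 (p *\<^sub>R x) (q *\<^sub>R y) (r *\<^sub>R z)"
  unfolding vec_eq_iff forall_3
  by (simp add: mk3_def matrix_matrix_mult_def sum_3)

lemma det_diag3: "det (diag3 a b c) = a * b * c"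
  by (simp add: det_3)

lemma svd3:
  fixes A :: "real^3^3" assumes dA: "det A > 0"
  shows "\<exists>U V s1 s2 s3. orthogonal_matrix U \<and> det U = 1 \<and> orthogonal_matrix V \<and> det V = 1 \<and>
     0 < s1 \<and> s1 \<le> s2 \<and> s2 \<le> s3 \<and> A = U ** diag3 s1 s2 s3 ** transpose V"
proof -
  define M where "M = transpose A ** A"
  have sym: "transpose M = M" by (simp add: M_def matrix_transpose_mul)
  have ax: "axis 1 1 \<noteq> (0::real^3)" by (simp add: axis_eq_0_iff)
  obtain v3 where v3: "norm v3 = 1" "M *v v3 = (v3 \<bullet> (M *v v3)) *\<^sub>R v3"
     "\<forall>x. norm x = 1 \<longrightarrow> x \<bullet> (M *v x) \<le> v3 \<bullet> (M *v v3)"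
    using sym_eig[OF sym subspace_UNIV _ ax] by auto
  define m3 where "m3 = v3 \<bullet> (M *v v3)"
  have Mv3: "M *v v3 = m3 *\<^sub>R v3" using v3 m3_def by simp
  obtain y where y: "y \<noteq> 0" "orthogonal v3 y"
    using orthogonal_to_vector_exists[of v3] by auto
  have "\<exists>v\<in>{x. v3 \<bullet> x = 0}. norm v = 1 \<and> M *v v = (v \<bullet> (M *v v)) *\<^sub>R v \<and>
          (\<forall>x\<in>{x. v3 \<bullet> x = 0}. norm x = 1 \<longrightarrow> x \<bullet> (M *v x) \<le> v \<bullet> (M *v v))"
  proof (rule sym_eig[OF sym subspace_hyperplane, of y])
    show "y \<in> {x. v3 \<bullet> x = 0}" using y by (simp add: orthogonal_def)
    show "y \<noteq> 0" by fact
    fix x assume "x \<in> {x. v3 \<bullet> x = 0}"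
    thus "M *v x \<in> {x. v3 \<bullet> x = 0}"
      using sym_inner[OF sym, of v3 x] by (simp add: Mv3)
  qed
  then obtain v2 where v2: "v3 \<bullet> v2 = 0" "norm v2 = 1" "M *v v2 = (v2 \<bullet> (M *v v2)) *\<^sub>R v2"
     "\<forall>x. v3 \<bullet> x = 0 \<longrightarrow> norm x = 1 \<longrightarrow> x \<bullet> (M *v x) \<le> v2 \<bullet> (M *v v2)" by auto
  define m2 where "m2 = v2 \<bullet> (M *v v2)"
  have Mv2: "M *v v2 = m2 *\<^sub>R v2" using v2 m2_def by simp
  define z where "z = cross3 v3 v2"
  have "(norm z)\<^sup>2 + (v3 \<bullet> v2)\<^sup>2 = (norm v3 * norm v2)\<^sup>2" unfolding z_def by (rule norm_cross_dot)
  hence "(norm z)\<^sup>2 = 1" using v2 v3 by simp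
  hence z0: "z \<noteq> 0" by (metis norm_zero power2_eq_square mult_zero_left zero_neq_one)
  have "\<exists>v\<in>{x. v3 \<bullet> x = 0} \<inter> {x. v2 \<bullet> x = 0}. norm v = 1 \<and> M *v v = (v \<bullet> (M *v v)) *\<^sub>R v \<and>
          (\<forall>x\<in>{x. v3 \<bullet> x = 0} \<inter> {x. v2 \<bullet> x = 0}. norm x = 1 \<longrightarrow> x \<bullet> (M *v x) \<le> v \<bullet> (M *v v))"
  proof (rule sym_eig[OF sym subspace_inter[OF subspace_hyperplane subspace_hyperplane], of z])
    show "z \<in> {x. v3 \<bullet> x = 0} \<inter> {x. v2 \<bullet> x = 0}" unfolding z_def using dot_cross_self by auto
    show "z \<noteq> 0" by fact
    fix x assume "x \<in> {x. v3 \<bullet> x = 0} \<inter> {x. v2 \<bullet> x = 0}"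
    thus "M *v x \<in> {x. v3 \<bullet> x = 0} \<inter> {x. v2 \<bullet> x = 0}"
      using sym_inner[OF sym, of v3 x] sym_inner[OF sym, of v2 x] by (simp add: Mv3 Mv2)
  qed
  then obtain v1 where v1: "v3 \<bullet> v1 = 0" "v2 \<bullet> v1 = 0" "norm v1 = 1" "M *v v1 = (v1 \<bullet> (M *v v1)) *\<^sub>R v1"
    by auto
  define m1 where "m1 = v1 \<bullet> (M *v v1)"
  have Mv1: "M *v v1 = m1 *\<^sub>R v1" using v1 m1_def by simp
  have m23: "m2 \<le> m3" using v3(3) v2(2) m2_def m3_def by auto
  have m12: "m1 \<le> m2" using v2(4) v1 m1_def m2_def by auto
  have pos: "m > 0" if "m = v \<bullet> (M *v v)" "norm v = 1" for m v
  proof -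
    have "A *v v \<noteq> 0" using ker_det[of A v] dA that(2) by auto
    thus ?thesis using that(1) by (simp add: M_def rayleigh_nonneg)
  qed
  have m1p: "m1 > 0" using pos[OF m1_def v1(3)] .
  have m2p: "m2 > 0" using pos[OF m2_def v2(2)] .
  have m3p: "m3 > 0" using pos[OF m3_def v3(1)] .
  have o0: "orthogonal_matrix (mk3 v1 v2 v3)"
    using v1 v2 v3 by (intro mk3_orth) (auto simp: inner_commute)
  define e where "e = det (mk3 v1 v2 v3)"
  have e: "e = 1 \<or> e = -1" using det_orthogonal_matrix[OF o0] e_def by simp
  define w1 where "w1 = e *\<^sub>R v1"
  have w1: "v3 \<bullet> w1 = 0" "v2 \<bullet> w1 = 0" "norm w1 = 1" "M *v w1 = m1 *\<^sub>R w1"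
    using v1 e Mv1 by (auto simp: w1_def matrix_vector_mult_scaleR)
  define V where "V = mk3 w1 v2 v3"
  have oV: "orthogonal_matrix V" unfolding V_def
    using w1 v2 v3 by (intro mk3_orth) (auto simp: inner_commute)
  have dV: "det V = 1" unfolding V_def w1_def det_mk3_scale using e e_def by auto
  define s1 where "s1 = sqrt m1"
  define s2 where "s2 = sqrt m2"
  define s3 where "s3 = sqrt m3"
  have s1p: "s1 > 0" and s2p: "s2 > 0" and s3p: "s3 > 0" using m1p m2p m3p by (auto simp: s1_def s2_def s3_def)
  have s12: "s1 \<le> s2" and s23: "s2 \<le> s3" using m12 m23 by (auto simp: s1_def s2_def s3_def)
  define u1 where "u1 = (1/s1) *\<^sub>R (A *v w1)"
  define u2 where "u2 = (1/s2) *\<^sub>R (A *v v2)"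
  define u3 where "u3 = (1/s3) *\<^sub>R (A *v v3)"
  have ip: "(A *v x) \<bullet> (A *v y) = x \<bullet> (M *v y)" for x y by (simp add: M_def inner_AtA)
  have sq1: "s1 * s1 = m1" and sq2: "s2 * s2 = m2" and sq3: "s3 * s3 = m3"
    using m1p m2p m3p by (auto simp: s1_def s2_def s3_def)
  have n11: "w1 \<bullet> w1 = 1" and n22: "v2 \<bullet> v2 = 1" and n33: "v3 \<bullet> v3 = 1"
    using w1(3) v2(2) v3(1) by (auto simp: norm_eq_1)
  have "u1 \<bullet> u1 = 1" unfolding u1_def using s1p sq1 n11 m1p
    by (simp add: ip w1(4))
  hence nu1: "norm u1 = 1" by (simp add: norm_eq_1)
  have "u2 \<bullet> u2 = 1" unfolding u2_def using s2p sq2 n22 m2p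
    by (simp add: ip Mv2)
  hence nu2: "norm u2 = 1" by (simp add: norm_eq_1)
  have "u3 \<bullet> u3 = 1" unfolding u3_def using s3p sq3 n33 m3p
    by (simp add: ip Mv3)
  hence nu3: "norm u3 = 1" by (simp add: norm_eq_1)
  have u12: "u1 \<bullet> u2 = 0" unfolding u1_def u2_def using w1 by (simp add: ip Mv2 inner_commute)
  have u13: "u1 \<bullet> u3 = 0" unfolding u1_def u3_def using w1 by (simp add: ip Mv3 inner_commute)
  have u23: "u2 \<bullet> u3 = 0" unfolding u2_def u3_def using v2 by (simp add: ip Mv3 inner_commute)
  define U where "U = mk3 u1 u2 u3"
  have oU: "orthogonal_matrix U" unfolding U_def using nu1 nu2 nu3 u12 u13 u23 by (intro mk3_orth)
  have AV: "A ** V = U ** diag3 s1 s2 s3"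
    unfolding V_def U_def mult_mk3 mk3_diag u1_def u2_def u3_def using s1p s2p s3p by simp
  have "A = A ** (V ** transpose V)" using oV by (simp add: orthogonal_matrix_def)
  also have "\<dots> = U ** diag3 s1 s2 s3 ** transpose V" by (simp add: matrix_mul_assoc AV)
  finally have Aeq: "A = U ** diag3 s1 s2 s3 ** transpose V" .
  have "det A = det U * (s1 * s2 * s3)"
    using arg_cong[OF AV, of det] by (simp add: det_mul dV det_diag3)
  hence "det U > 0" using dA s1p s2p s3p by (metis mult_pos_pos zero_less_mult_pos2)
  hence dU: "det U = 1" using det_orthogonal_matrix[OF oU] by auto
  show ?thesis using oU dU oV dV s1p s12 s23 Aeq by blast
qed


lemma root_in:
  fixes a b1 b2 b3 :: real
  assumes "(a-b1)*(a-b2)*(a-b3) = 0"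
  shows "a = b1 \<or> a = b2 \<or> a = b3"
  using assms by auto

lemma roots_match:
  fixes a1 a2 a3 b1 b2 b3 :: real
  assumes H: "\<And>t. (t-a1)*(t-a2)*(t-a3) = (t-b1)*(t-b2)*(t-b3)"
    and "a1 \<le> a2" "a2 \<le> a3" "b1 \<le> b2" "b2 \<le> b3"
  shows "a1 = b1 \<and> a2 = b2 \<and> a3 = b3"
proof -
  have "(a1-b1)*(a1-b2)*(a1-b3) = 0" using H[of a1] by simp
  hence A1: "a1 = b1 \<or> a1 = b2 \<or> a1 = b3" by (rule root_in)
  have "(a3-b1)*(a3-b2)*(a3-b3) = 0" using H[of a3] by simp
  hence A3: "a3 = b1 \<or> a3 = b2 \<or> a3 = b3" by (rule root_in)
  have "(b1-a1)*(b1-a2)*(b1-a3) = 0" using H[of b1] by simp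
  hence B1: "b1 = a1 \<or> b1 = a2 \<or> b1 = a3" by (rule root_in)
  have "(b3-a1)*(b3-a2)*(b3-a3) = 0" using H[of b3] by simp
  hence B3: "b3 = a1 \<or> b3 = a2 \<or> b3 = a3" by (rule root_in)
  have e1: "a1 = b1" using A1 B1 assms(2-5) by linarith
  have e3: "a3 = b3" using A3 B3 assms(2-5) by linarith
  have h0: "(0-a1)*(0-a2)*(0-a3) = (0-b1)*(0-b2)*(0-b3)" by (rule H)
  have h1: "(1-a1)*(1-a2)*(1-a3) = (1-b1)*(1-b2)*(1-b3)" by (rule H)
  have h2: "(-1-a1)*(-1-a2)*(-1-a3) = (-1-b1)*(-1-b2)*(-1-b3)" by (rule H)
  have "-2*(a1+a2+a3) = (1-a1)*(1-a2)*(1-a3) + (-1-a1)*(-1-a2)*(-1-a3) - 2*((0-a1)*(0-a2)*(0-a3))"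
    by (simp add: algebra_simps)
  also have "\<dots> = (1-b1)*(1-b2)*(1-b3) + (-1-b1)*(-1-b2)*(-1-b3) - 2*((0-b1)*(0-b2)*(0-b3))"
    by (simp only: h0 h1 h2)
  also have "\<dots> = -2*(b1+b2+b3)" by (simp add: algebra_simps)
  finally have "a1+a2+a3 = b1+b2+b3" by simp
  thus ?thesis using e1 e3 by linarith
qed

lemma transpose_diag3: "transpose (diag3 a b c) = diag3 a b c"
  unfolding vec_eq_iff forall_3 by (simp add: transpose_def)

lemma diag3_mult: "diag3 a b c ** diag3 p q r = diag3 (a*p) (b*q) (c*r)"
  unfolding vec_eq_iff forall_3 by (simp add: matrix_matrix_mult_def sum_3)

lemma conj_diag_sub: "V ** diag3 (t-a) (t-b) (t-c) ** transpose V
     = t *\<^sub>R (V ** transpose V) - V ** diag3 a b c ** transpose V" for V :: "real^3^3"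
  unfolding vec_eq_iff forall_3 by (simp add: matrix_matrix_mult_def sum_3 transpose_def algebra_simps)

lemma conj_diag_const: "V ** diag3 p p p ** transpose V = p *\<^sub>R (V ** transpose V)" for V :: "real^3^3"
  unfolding vec_eq_iff forall_3 by (simp add: matrix_matrix_mult_def sum_3 transpose_def algebra_simps)


theorem lemma4p1:
  fixes lam l1 l2 l3 :: real and A :: "real^3^3"
  assumes "lam > 0"
    and "det A > 0"
    and "singular_values3 A l1 l2 l3"
    and "l1 \<le> l2" and "l2 \<le> l3"
  shows "\<exists>R :: real^3^3. orthogonal_matrix R \<and> det R = 1 \<and>
           Gfun lam A l1 l2 l3 =
             (1 - R $ 1 $ 1) * (l2 * l3 - lam * l1)
           + (1 - R $ 2 $ 2) * (l1 * l3 - lam * l2)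
           + (1 - R $ 3 $ 3) * (l1 * l2 - lam * l3)"
proof -
  obtain U V s1 s2 s3 where oU: "orthogonal_matrix U" and dU: "det U = 1"
    and oV: "orthogonal_matrix V" and dV: "det V = 1"
    and s: "0 < s1" "s1 \<le> s2" "s2 \<le> s3" and Aeq: "A = U ** diag3 s1 s2 s3 ** transpose V"
    using svd3[OF assms(2)] by blast
  have UU: "transpose U ** U = mat 1" and VV: "V ** transpose V = mat 1"
    using oU oV by (auto simp: orthogonal_matrix_def)
  have UUx: "X ** transpose U ** U = X" for X :: "real^3^3"
    by (metis matrix_mul_assoc UU matrix_mul_rid)
  have diag3_multx: "X ** diag3 a b c ** diag3 p q r = X ** diag3 (a*p) (b*q) (c*r)" for a b c p q r and X :: "real^3^3"
    by (metis matrix_mul_assoc diag3_mult)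
  have At: "transpose A = V ** diag3 s1 s2 s3 ** transpose U"
    unfolding Aeq by (simp add: matrix_transpose_mul transpose_diag3 matrix_mul_assoc)
  have M: "transpose A ** A = V ** diag3 (s1* s1) (s2* s2) (s3* s3) ** transpose V"
    unfolding Aeq
    by (simp add: matrix_transpose_mul transpose_diag3 matrix_mul_assoc UUx diag3_multx)
  have cp: "(t - s1* s1) * (t - s2* s2) * (t - s3* s3) = (t - l1\<^sup>2) * (t - l2\<^sup>2) * (t - l3\<^sup>2)" for t
  proof -
    have "t *\<^sub>R mat 1 - transpose A ** A = V ** diag3 (t - s1* s1) (t - s2* s2) (t - s3* s3) ** transpose V"
      unfolding M conj_diag_sub VV by simp
    hence "det (t *\<^sub>R mat 1 - transpose A ** A) = (t - s1* s1) * (t - s2* s2) * (t - s3* s3)"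
      by (simp add: det_mul dV det_diag3)
    thus ?thesis using assms(3) unfolding singular_values3_def by simp
  qed
  have l0: "0 \<le> l1" using assms(3) unfolding singular_values3_def by simp
  have "s1* s1 = l1\<^sup>2 \<and> s2* s2 = l2\<^sup>2 \<and> s3* s3 = l3\<^sup>2"
  proof (rule roots_match[OF cp])
    show "s1* s1 \<le> s2* s2" using s by (simp add: mult_mono)
    show "s2* s2 \<le> s3* s3" using s by (simp add: mult_mono)
    show "l1\<^sup>2 \<le> l2\<^sup>2" using l0 assms(4) by (simp add: power_mono)
    show "l2\<^sup>2 \<le> l3\<^sup>2" using l0 assms(4,5) by (simp add: power_mono)
  qed
  hence "s1 = l1 \<and> s2 = l2 \<and> s3 = l3" using s l0 assms(4,5)
    by (metis power2_eq_square order_trans less_imp_le power2_eq_iff_nonneg)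
  hence Aeq': "A = U ** diag3 l1 l2 l3 ** transpose V" using Aeq by simp
  define R where "R = transpose V ** U"
  have oR: "orthogonal_matrix R" unfolding R_def using oU oV by (simp add: orthogonal_matrix_mul)
  have dR: "det R = 1" unfolding R_def by (simp add: det_mul dU dV)
  have trA: "trace A = l1 * R$1$1 + l2 * R$2$2 + l3 * R$3$3"
    unfolding Aeq' trace_svd R_def ..
  define C where "C = U ** diag3 (l2*l3) (l1*l3) (l1*l2) ** transpose V"
  have dA: "det A = l1*l2*l3" unfolding Aeq' by (simp add: det_mul dU dV det_diag3)
  have "transpose A ** C = V ** (diag3 l1 l2 l3 ** (transpose U ** U) ** diag3 (l2*l3) (l1*l3) (l1*l2)) ** transpose V"
    unfolding Aeq' C_def by (simp add: matrix_transpose_mul transpose_diag3 matrix_mul_assoc)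
  also have "\<dots> = V ** diag3 (l1*l2*l3) (l1*l2*l3) (l1*l2*l3) ** transpose V"
    by (simp add: UU diag3_mult mult_ac)
  also have "\<dots> = det A *\<^sub>R mat 1" unfolding conj_diag_const VV dA ..
  finally have tC: "transpose A ** C = transpose A ** cof A" by (simp add: cof_prop)
  have "invertible (transpose A)" using assms(2) by (simp add: invertible_det_nz)
  then obtain B where B: "B ** transpose A = mat 1" unfolding invertible_def by blast
  have cofA: "cof A = C" by (metis tC B matrix_mul_assoc matrix_mul_lid)
  have trC: "trace (cof A) = (l2*l3) * R$1$1 + (l1*l3) * R$2$2 + (l1*l2) * R$3$3"
    unfolding cofA C_def trace_svd R_def ..
  show ?thesis
  proof (intro exI conjI)
    show "orthogonal_matrix R" by fact
    show "det R = 1" by fact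
    show "Gfun lam A l1 l2 l3 =
             (1 - R $ 1 $ 1) * (l2 * l3 - lam * l1)
           + (1 - R $ 2 $ 2) * (l1 * l3 - lam * l2)
           + (1 - R $ 3 $ 3) * (l1 * l2 - lam * l3)"
      unfolding Gfun_def Pfun_def Nfun_def trA trC by (simp add: algebra_simps)
  qed
qed

end
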